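(* Let $k\geq 1$ be an odd integer and let $G$ be a finite simple graph that has an almost perfect integer $k$-matching. Then for every $S\subseteq V(G)$, $$\mathrm{odd}(G-S)+k\cdot i(G-S)\leq k|S|+1 .$$
   Context: All graphs are finite, simple and undirected. For $v\in V(G)$, $\Gamma(v)$ denotes the set of edges incident with $v$. For a positive integer $k$, an integer $k$-matching of $G$ is a function $h:E(G)\to\{0,1,\dots,k\}$ such that $\sum_{e\in\Gamma(v)}h(e)\leq k$ for every $v\in V(G)$. It is almost perfect if there is exactly one vertex $v'$ with $\sum_{e\in\Gamma(v')}h(e)=k-1$ and $\sum_{e\in\Gamma(v)}h(e)=k$ for every other vertex $v$. For a graph $H$, $i(H)$ is the number of isolated vertices (vertices of degree $0$) of $H$, and $\mathrm{odd}(H)$ is the number of connected components of $H$ that have an odd number of vertices and at least three vertices. *)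

theory Defs
  imports Main
begin

definition simple_graph :: "'a set \<Rightarrow> 'a set set \<Rightarrow> bool" where
  "simple_graph V E \<longleftrightarrow> finite V \<and> (\<forall>e\<in>E. e \<subseteq> V \<and> card e = 2)"

definition inc_edges :: "'a set set \<Rightarrow> 'a \<Rightarrow> 'a set set" where
  "inc_edges E v = {e \<in> E. v \<in> e}"

definition int_k_matching :: "'a set \<Rightarrow> 'a set set \<Rightarrow> nat \<Rightarrow> ('a set \<Rightarrow> nat) \<Rightarrow> bool" where
  "int_k_matching V E k h \<longleftrightarrow>
     (\<forall>e\<in>E. h e \<le> k) \<and> (\<forall>v\<in>V. (\<Sum>e\<in>inc_edges E v. h e) \<le> k)"

definition almost_perfect_int_k_matching ::
  "'a set \<Rightarrow> 'a set set \<Rightarrow> nat \<Rightarrow> ('a set \<Rightarrow> nat) \<Rightarrow> bool" where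
  "almost_perfect_int_k_matching V E k h \<longleftrightarrow>
     int_k_matching V E k h \<and>
     (\<exists>!v'. v' \<in> V \<and> (\<Sum>e\<in>inc_edges E v'. h e) = k - 1) \<and>
     (\<exists>v'\<in>V. (\<Sum>e\<in>inc_edges E v'. h e) = k - 1 \<and>
        (\<forall>v\<in>V - {v'}. (\<Sum>e\<in>inc_edges E v. h e) = k))"

text \<open>The graph G - S: vertex set V - S, edges of E avoiding S.\<close>
definition del_edges :: "'a set set \<Rightarrow> 'a set \<Rightarrow> 'a set set" where
  "del_edges E S = {e \<in> E. e \<inter> S = {}}"

inductive reach :: "'a set \<Rightarrow> 'a set set \<Rightarrow> 'a \<Rightarrow> 'a \<Rightarrow> bool" for V E where
  refl: "v \<in> V \<Longrightarrow> reach V E v v"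
| step: "reach V E u v \<Longrightarrow> {v, w} \<in> E \<Longrightarrow> w \<in> V \<Longrightarrow> reach V E u w"

definition components :: "'a set \<Rightarrow> 'a set set \<Rightarrow> 'a set set" where
  "components V E = (\<lambda>v. {w. reach V E v w}) ` V"

definition iso_count :: "'a set \<Rightarrow> 'a set set \<Rightarrow> nat" where
  "iso_count V E = card {v \<in> V. inc_edges E v = {}}"

definition odd_count :: "'a set \<Rightarrow> 'a set set \<Rightarrow> nat" where
  "odd_count V E = card {C \<in> components V E. odd (card C) \<and> card C \<ge> 3}"

end

theory Submission
  imports Defs
begin

lemma reach_in: "reach V E u v \<Longrightarrow> u \<in> V \<and> v \<in> V"
  by (induction rule: reach.induct) auto

lemma reach_prepend: "reach V E a b \<Longrightarrow> {c,a} \<in> E \<Longrightarrow> c \<in> V \<Longrightarrow> reach V E c b"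
proof (induction rule: reach.induct)
  case (refl v) then show ?case by (meson reach.refl reach.step)
next
  case (step u v w) then show ?case by (meson reach.step)
qed

lemma reach_sym: "reach V E u v \<Longrightarrow> reach V E v u"
proof (induction rule: reach.induct)
  case (refl v) then show ?case by (rule reach.refl)
next
  case (step u v w) then show ?case
    by (metis reach_prepend insert_commute)
qed

lemma reach_trans: "reach V E b c \<Longrightarrow> reach V E a b \<Longrightarrow> reach V E a c"
  by (induction rule: reach.induct) (auto intro: reach.step)

lemma reach_iso: "reach V E a z \<Longrightarrow> inc_edges E a = {} \<Longrightarrow> z = a"
proof (induction rule: reach.induct)
  case (refl v) then show ?case by simp
next
  case (step u v w)
  then have "{v,w} \<in> inc_edges E u" by (auto simp: inc_edges_def)
  with step show ?case by auto
qed

lemma comp_disj: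
  assumes "X \<in> components V E" "Y \<in> components V E" "x \<in> X" "x \<in> Y"
  shows "X = Y"
proof -
  obtain u1 where u1: "X = {w. reach V E u1 w}" using assms(1) by (auto simp: components_def)
  obtain u2 where u2: "Y = {w. reach V E u2 w}" using assms(2) by (auto simp: components_def)
  have "reach V E u1 x" "reach V E u2 x" using assms u1 u2 by auto
  then have "reach V E u1 u2" "reach V E u2 u1" by (meson reach_sym reach_trans)+
  then show ?thesis unfolding u1 u2 by (auto intro: reach_trans)
qed

lemma sum_inc_swap:
  assumes "finite E" "finite C"
  shows "(\<Sum>v\<in>C. \<Sum>e\<in>inc_edges E v. (h e::nat)) = (\<Sum>e\<in>E. card (C \<inter> e) * h e)"
proof -
  have "(\<Sum>v\<in>C. \<Sum>e\<in>inc_edges E v. h e) = (\<Sum>v\<in>C. \<Sum>e\<in>E. if v \<in> e then h e else 0)"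
    unfolding inc_edges_def using assms by (simp add: sum.inter_filter)
  also have "\<dots> = (\<Sum>e\<in>E. \<Sum>v\<in>C. if v \<in> e then h e else 0)" by (rule sum.swap)
  also have "\<dots> = (\<Sum>e\<in>E. card (C \<inter> e) * h e)"
  proof (rule sum.cong)
    fix e assume "e \<in> E"
    have "(\<Sum>v\<in>C. if v \<in> e then h e else 0) = (\<Sum>v\<in>{v\<in>C. v \<in> e}. h e)"
      using sum.inter_filter[OF assms(2), of "\<lambda>_. h e" "\<lambda>v. v \<in> e"] by simp
    also have "{v\<in>C. v \<in> e} = C \<inter> e" by auto
    finally show "(\<Sum>v\<in>C. if v \<in> e then h e else 0) = card (C \<inter> e) * h e" by simp
  qed simp
  finally show ?thesis .
qed

lemma parity:
  assumes sg: "simple_graph V E" and CV: "C \<subseteq> V - S"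
    and clo: "\<And>x w. x \<in> C \<Longrightarrow> w \<in> V - S \<Longrightarrow> {x,w} \<in> del_edges E S \<Longrightarrow> w \<in> C"
  shows "(\<Sum>v\<in>C. \<Sum>e\<in>inc_edges E v. (h e::nat)) =
     2 * (\<Sum>e\<in>E. if e \<subseteq> C then h e else 0) +
     (\<Sum>e\<in>E. if e \<inter> C \<noteq> {} \<and> e \<inter> S \<noteq> {} then h e else 0)"
proof -
  have fV: "finite V" and eV: "\<And>e. e \<in> E \<Longrightarrow> e \<subseteq> V \<and> card e = 2"
    using sg by (auto simp: simple_graph_def)
  have fE: "finite E" using fV eV by (meson finite_Pow_iff finite_subset PowI subsetI)
  have fC: "finite C" using fV CV by (meson Diff_subset finite_subset)
  have "(\<Sum>v\<in>C. \<Sum>e\<in>inc_edges E v. h e) = (\<Sum>e\<in>E. card (C \<inter> e) * h e)"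
    using sum_inc_swap[OF fE fC] .
  also have "\<dots> = (\<Sum>e\<in>E. 2 * (if e \<subseteq> C then h e else 0) +
       (if e \<inter> C \<noteq> {} \<and> e \<inter> S \<noteq> {} then h e else 0))"
  proof (rule sum.cong)
    fix e assume eE: "e \<in> E"
    then obtain a b where ab: "e = {a,b}" "a \<noteq> b" using eV by (meson card_2_iff)
    have abV: "a \<in> V" "b \<in> V" using eV[OF eE] ab by auto
    show "card (C \<inter> e) * h e = 2 * (if e \<subseteq> C then h e else 0) +
       (if e \<inter> C \<noteq> {} \<and> e \<inter> S \<noteq> {} then h e else 0)"
    proof (cases "a \<in> C"; cases "b \<in> C")
      assume "a \<in> C" "b \<in> C"
      then have "C \<inter> e = e" "e \<subseteq> C" "e \<inter> S = {}" using ab CV by auto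
      then show ?thesis using ab by simp
    next
      assume "a \<notin> C" "b \<notin> C"
      then have "C \<inter> e = {}" "\<not> e \<subseteq> C" using ab by auto
      then show ?thesis by auto
    next
      assume a: "a \<in> C" "b \<notin> C"
      have "b \<in> S"
      proof (rule ccontr)
        assume "b \<notin> S"
        then have "{a,b} \<in> del_edges E S" using a CV eE ab by (auto simp: del_edges_def)
        then show False using clo[OF a(1)] abV \<open>b \<notin> S\<close> a by auto
      qed
      then have "C \<inter> e = {a}" "\<not> e \<subseteq> C" "e \<inter> C \<noteq> {}" "e \<inter> S \<noteq> {}" using a ab by auto
      then show ?thesis by simp
    next
      assume a: "b \<in> C" "a \<notin> C"
      have "a \<in> S"
      proof (rule ccontr)
        assume "a \<notin> S"
        then have "{b,a} \<in> del_edges E S" using a CV eE ab by (auto simp: del_edges_def insert_commute)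
        then show False using clo[OF a(1)] abV \<open>a \<notin> S\<close> a by auto
      qed
      then have "C \<inter> e = {b}" "\<not> e \<subseteq> C" "e \<inter> C \<noteq> {}" "e \<inter> S \<noteq> {}" using a ab by auto
      then show ?thesis by simp
    qed
  qed simp
  also have "\<dots> = 2 * (\<Sum>e\<in>E. if e \<subseteq> C then h e else 0) +
     (\<Sum>e\<in>E. if e \<inter> C \<noteq> {} \<and> e \<inter> S \<noteq> {} then h e else 0)"
    by (simp add: sum.distrib sum_distrib_left)
  finally show ?thesis .
qed

theorem lemma3p6:
  fixes V :: "'a set" and E :: "'a set set" and k :: nat and h :: "'a set \<Rightarrow> nat"
    and S :: "'a set"
  assumes "simple_graph V E"
    and "k \<ge> 1" and "odd k"
    and "almost_perfect_int_k_matching V E k h"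
    and "S \<subseteq> V"
  shows "odd_count (V - S) (del_edges E S) + k * iso_count (V - S) (del_edges E S)
           \<le> k * card S + 1"
proof -
  note sg = assms(1)
  have fV: "finite V" and eV: "\<And>e. e \<in> E \<Longrightarrow> e \<subseteq> V \<and> card e = 2"
    using sg by (auto simp: simple_graph_def)
  have fE: "finite E" using fV eV by (meson finite_Pow_iff finite_subset PowI subsetI)
  define deg where "deg v = (\<Sum>e\<in>inc_edges E v. h e)" for v
  have degle: "\<And>v. v \<in> V \<Longrightarrow> deg v \<le> k"
    using assms(4) by (auto simp: almost_perfect_int_k_matching_def int_k_matching_def deg_def)
  obtain v' where v': "v' \<in> V" "deg v' = k - 1" "\<And>v. v \<in> V - {v'} \<Longrightarrow> deg v = k"
    using assms(4) unfolding almost_perfect_int_k_matching_def deg_def by blast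
  define V' where "V' = V - S"
  define E' where "E' = del_edges E S"
  define OC where "OC = {C \<in> components V' E'. odd (card C) \<and> card C \<ge> 3}"
  define I where "I = {v \<in> V'. inc_edges E' v = {}}"
  define F where "F = OC \<union> (\<lambda>v. {v}) ` I"
  define BB where "BB X = {e \<in> E. e \<inter> X \<noteq> {} \<and> e \<inter> S \<noteq> {}}" for X
  define b where "b X = (\<Sum>e\<in>BB X. h e)" for X
  define w where "w X = (if X \<in> OC then 1 else k)" for X
  have compV: "\<And>C. C \<in> components V' E' \<Longrightarrow> C \<subseteq> V'"
    by (auto simp: components_def dest: reach_in)
  have fV': "finite V'" using fV by (simp add: V'_def)
  have fcomp: "finite (components V' E')" using fV' by (simp add: components_def)
  have fO: "finite OC" using fcomp by (simp add: OC_def)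
  have fI: "finite I" using fV' by (simp add: I_def)
  have fF: "finite F" using fO fI by (simp add: F_def)
  have FV: "\<And>X. X \<in> F \<Longrightarrow> X \<subseteq> V'"
    using compV by (auto simp: F_def OC_def I_def)
  have Fdisj: "\<And>X Y. X \<in> F \<Longrightarrow> Y \<in> F \<Longrightarrow> X \<noteq> Y \<Longrightarrow> X \<inter> Y = {}"
  proof -
    have oi: "v \<notin> X" if X: "X \<in> OC" and v: "v \<in> I" for X v
    proof
      assume vX: "v \<in> X"
      obtain u where u: "X = {z. reach V' E' u z}" using X by (auto simp: OC_def components_def)
      have iso: "inc_edges E' v = {}" using v by (simp add: I_def)
      have "reach V' E' v u" using vX u reach_sym by auto
      then have "X \<subseteq> {v}" using u reach_iso[OF _ iso] reach_trans by blast
      then have "card X \<le> 1" using card_mono[of "{v}" X] by simp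
      then show False using X by (simp add: OC_def)
    qed
    fix X Y assume XY: "X \<in> F" "Y \<in> F" "X \<noteq> Y"
    show "X \<inter> Y = {}"
    proof (rule ccontr)
      assume "X \<inter> Y \<noteq> {}"
      then obtain x where x: "x \<in> X" "x \<in> Y" by auto
      show False
        using XY x oi comp_disj[of X V' E' Y x] by (auto simp: F_def OC_def)
    qed
  qed
  have BBdisj: "\<And>X Y. X \<in> F \<Longrightarrow> Y \<in> F \<Longrightarrow> X \<noteq> Y \<Longrightarrow> BB X \<inter> BB Y = {}"
  proof (rule ccontr)
    fix X Y assume XY: "X \<in> F" "Y \<in> F" "X \<noteq> Y" and ne: "BB X \<inter> BB Y \<noteq> {}"
    then obtain e where e: "e \<in> E" "e \<inter> X \<noteq> {}" "e \<inter> Y \<noteq> {}" "e \<inter> S \<noteq> {}"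
      by (auto simp: BB_def)
    then obtain a c d where acd: "a \<in> e" "a \<in> X" "c \<in> e" "c \<in> Y" "d \<in> e" "d \<in> S" by blast
    have "X \<inter> Y = {}" using Fdisj XY by blast
    moreover have "X \<subseteq> V'" "Y \<subseteq> V'" using FV XY by auto
    ultimately have dist: "a \<noteq> c" "a \<noteq> d" "c \<noteq> d" using acd by (auto simp: V'_def)
    have "card {a,c,d} \<le> card e" using acd eV[OF e(1)]
      by (intro card_mono) (auto intro: finite_subset[OF _ fV])
    then show False using dist eV[OF e(1)] by simp
  qed
  have fBB: "\<And>X. finite (BB X)" using fE by (simp add: BB_def)
  have "(\<Sum>X\<in>F. b X) = (\<Sum>e\<in>(\<Union>X\<in>F. BB X). h e)"
    unfolding b_def by (rule sum.UNION_disjoint[symmetric]) (use fF fBB BBdisj in auto)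
  also have "\<dots> \<le> (\<Sum>e\<in>{e\<in>E. e \<inter> S \<noteq> {}}. h e)"
    by (rule sum_mono2) (use fE in \<open>auto simp: BB_def\<close>)
  also have "\<dots> = (\<Sum>e\<in>E. if e \<inter> S \<noteq> {} then h e else 0)"
    by (rule sum.inter_filter[OF fE])
  also have "\<dots> \<le> (\<Sum>e\<in>E. \<Sum>s\<in>S. if s \<in> e then h e else 0)"
  proof (rule sum_mono)
    fix e assume "e \<in> E"
    show "(if e \<inter> S \<noteq> {} then h e else 0) \<le> (\<Sum>s\<in>S. if s \<in> e then h e else 0)"
    proof (cases "e \<inter> S \<noteq> {}")
      case True
      then obtain s where s: "s \<in> S" "s \<in> e" by auto
      have fS: "finite S" using fV assms(5) finite_subset by blast
      have "(if s \<in> e then h e else 0) \<le> (\<Sum>s\<in>S. if s \<in> e then h e else 0)"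
        by (rule member_le_sum[OF s(1)]) (use fS in auto)
      then show ?thesis using True s by simp
    qed simp
  qed
  also have "\<dots> = (\<Sum>s\<in>S. \<Sum>e\<in>E. if s \<in> e then h e else 0)" by (rule sum.swap)
  also have "\<dots> = (\<Sum>s\<in>S. deg s)"
    unfolding deg_def inc_edges_def by (rule sum.cong) (simp_all add: sum.inter_filter[OF fE])
  also have "\<dots> \<le> (\<Sum>s\<in>S. k)" by (rule sum_mono) (use degle assms(5) in auto)
  finally have up0: "(\<Sum>X\<in>F. b X) \<le> card S * k" by simp
  have cm: "card S * k = k * card S" by (rule mult.commute)
  have up: "(\<Sum>X\<in>F. b X) \<le> k * card S" using up0 unfolding cm .
  have low: "w X \<le> b X + (if v' \<in> X then 1 else 0)" if X: "X \<in> F" for X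
  proof (cases "X \<in> OC")
    case True
    show ?thesis
    proof (cases "v' \<in> X")
      case False
      have XV: "X \<subseteq> V - S" using compV True by (auto simp: OC_def V'_def)
      obtain u where u: "X = {z. reach V' E' u z}" using True by (auto simp: OC_def components_def)
      have clo: "\<And>x z. x \<in> X \<Longrightarrow> z \<in> V - S \<Longrightarrow> {x,z} \<in> del_edges E S \<Longrightarrow> z \<in> X"
        using u by (auto simp: V'_def E'_def intro: reach.step)
      have par: "(\<Sum>v\<in>X. deg v) = 2 * (\<Sum>e\<in>E. if e \<subseteq> X then h e else 0) +
         (\<Sum>e\<in>E. if e \<inter> X \<noteq> {} \<and> e \<inter> S \<noteq> {} then h e else 0)"
        unfolding deg_def by (rule parity[OF sg XV clo])
      have "(\<Sum>v\<in>X. deg v) = (\<Sum>v\<in>X. k)" using v'(3) False XV by (intro sum.cong) auto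
      then have "odd (\<Sum>v\<in>X. deg v)" using True assms(3) by (simp add: OC_def)
      moreover have "(\<Sum>e\<in>E. if e \<inter> X \<noteq> {} \<and> e \<inter> S \<noteq> {} then h e else 0) = b X"
        unfolding b_def BB_def by (rule sum.inter_filter[OF fE, symmetric])
      ultimately have "odd (b X)" using par by simp
      then have "b X \<ge> 1" by (cases "b X") auto
      then show ?thesis using True by (simp add: w_def)
    qed (simp add: w_def True)
  next
    case False
    then obtain v where v: "v \<in> I" "X = {v}" using X by (auto simp: F_def)
    have vV: "v \<in> V" using v by (simp add: I_def V'_def)
    have "BB X = inc_edges E v"
      using v by (auto simp: BB_def inc_edges_def I_def E'_def del_edges_def)
    then have "b X = deg v" by (simp add: b_def deg_def)
    then show ?thesis using False v vV v' assms(2) by (cases "v = v'") (auto simp: w_def)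
  qed
  have "(\<Sum>X\<in>F. w X) \<le> (\<Sum>X\<in>F. b X + (if v' \<in> X then 1 else 0))"
    by (rule sum_mono) (rule low)
  also have "\<dots> = (\<Sum>X\<in>F. b X) + card {X\<in>F. v' \<in> X}"
    by (simp add: sum.distrib sum.inter_filter[OF fF, symmetric])
  also have "card {X\<in>F. v' \<in> X} \<le> 1"
  proof -
    have "finite {X\<in>F. v' \<in> X}" using fF by simp
    moreover have "\<forall>a1\<in>{X\<in>F. v' \<in> X}. \<forall>a2\<in>{X\<in>F. v' \<in> X}. a1 = a2" using Fdisj by blast
    ultimately show ?thesis using card_le_Suc0_iff_eq[of "{X\<in>F. v' \<in> X}"] by simp
  qed
  finally have wb: "(\<Sum>X\<in>F. w X) \<le> (\<Sum>X\<in>F. b X) + 1" by simp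
  have OIdisj: "OC \<inter> (\<lambda>v. {v}) ` I = {}" by (auto simp: OC_def)
  have "(\<Sum>X\<in>F. w X) = (\<Sum>X\<in>OC. w X) + (\<Sum>X\<in>(\<lambda>v. {v}) ` I. w X)"
    unfolding F_def by (rule sum.union_disjoint) (use fO fI OIdisj in auto)
  also have "(\<Sum>X\<in>OC. w X) = card OC" by (simp add: w_def)
  also have "(\<Sum>X\<in>(\<lambda>v. {v}) ` I. w X) = (\<Sum>v\<in>I. w {v})"
    by (subst sum.reindex) (simp_all add: inj_on_def)
  also have "\<dots> = (\<Sum>v\<in>I. k)" by (rule sum.cong) (auto simp: w_def OC_def)
  also have "\<dots> = card I * k" by simp
  also have "\<dots> = k * card I" by (rule mult.commute)
  finally have "card OC + k * card I \<le> k * card S + 1" using wb up by linarith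
  then show ?thesis by (simp add: odd_count_def iso_count_def OC_def I_def V'_def E'_def)
qed

end
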